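(* Let $L=E\cup F\Sigma^*$, where $E,F\subseteq\Sigma^*$ are finite, be a reverse definite language with state complexity $n\ge 1$. Then $\sigma(L)\le (n-1)!$, and this bound is tight (for every $n\ge1$ there is a reverse definite language with state complexity $n$ and syntactic complexity $(n-1)!$). Moreover, if $L$ achieves this upper bound, i.e. $\sigma(L)=(n-1)!$, and $n\ge 4$, then $|\Sigma|\ge (n-1)!-2(n-2)!$, and this bound is tight (for every $n\ge 4$ there is a reverse definite language over an alphabet of size exactly $(n-1)!-2(n-2)!$ with state complexity $n$ and syntactic complexity $(n-1)!$).
   Context: $\Sigma$ is a finite non-empty alphabet. A language $L\subseteq\Sigma^*$ is reverse definite if $L=E\cup F\Sigma^*$ for some finite languages $E,F\subseteq\Sigma^*$. The state complexity of a regular language is the number of states of its minimal deterministic finite automaton (DFA). The syntactic congruence of $L$ is $x\approx_L y$ iff for all $u,v\in\Sigma^*$, $uxv\in L\Leftrightarrow uyv\in L$; the syntactic semigroup is $\Sigma^+/\approx_L$, and the syntactic complexity $\sigma(L)$ is its cardinality (equivalently, the number of distinct transformations of the states of the minimal DFA of $L$ induced by non-empty words). *)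

theory Defs
  imports Main
begin

definition reverse_definite :: "'a set \<Rightarrow> 'a list set \<Rightarrow> bool" where
  "reverse_definite \<Sigma> L \<longleftrightarrow>
     (\<exists>E F. finite E \<and> finite F \<and> E \<subseteq> lists \<Sigma> \<and> F \<subseteq> lists \<Sigma> \<and>
        L = E \<union> {f @ w | f w. f \<in> F \<and> w \<in> lists \<Sigma>})"

definition is_dfa :: "'a set \<Rightarrow> 's set \<Rightarrow> ('s \<Rightarrow> 'a \<Rightarrow> 's) \<Rightarrow> 's \<Rightarrow> 's set \<Rightarrow> bool" where
  "is_dfa \<Sigma> Q \<delta> q0 Fs \<longleftrightarrow>
     finite Q \<and> q0 \<in> Q \<and> Fs \<subseteq> Q \<and> (\<forall>q\<in>Q. \<forall>a\<in>\<Sigma>. \<delta> q a \<in> Q)"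

definition dfa_lang :: "'a set \<Rightarrow> ('s \<Rightarrow> 'a \<Rightarrow> 's) \<Rightarrow> 's \<Rightarrow> 's set \<Rightarrow> 'a list set" where
  "dfa_lang \<Sigma> \<delta> q0 Fs = {w \<in> lists \<Sigma>. fold (\<lambda>a q. \<delta> q a) w q0 \<in> Fs}"

text \<open>State complexity: number of states of a minimal DFA recognising \<open>L\<close>
  (states can w.l.o.g. be taken to be natural numbers).\<close>

definition state_complexity :: "'a set \<Rightarrow> 'a list set \<Rightarrow> nat" where
  "state_complexity \<Sigma> L =
     (LEAST n. \<exists>(Q::nat set) \<delta> q0 Fs. is_dfa \<Sigma> Q \<delta> q0 Fs \<and> card Q = n \<and> dfa_lang \<Sigma> \<delta> q0 Fs = L)"

definition syntactic_cong :: "'a set \<Rightarrow> 'a list set \<Rightarrow> ('a list \<times> 'a list) set" where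
  "syntactic_cong \<Sigma> L =
     {(x, y). x \<in> lists \<Sigma> \<and> y \<in> lists \<Sigma> \<and>
        (\<forall>u\<in>lists \<Sigma>. \<forall>v\<in>lists \<Sigma>. u @ x @ v \<in> L \<longleftrightarrow> u @ y @ v \<in> L)}"

definition syntactic_complexity :: "'a set \<Rightarrow> 'a list set \<Rightarrow> nat" where
  "syntactic_complexity \<Sigma> L = card ((lists \<Sigma> - {[]}) // syntactic_cong \<Sigma> L)"

end

theory Submission
  imports Defs "HOL-Library.FuncSet"
begin


definition Cset :: "'q set \<Rightarrow> 'q set \<Rightarrow> ('q \<Rightarrow> nat) \<Rightarrow> ('q \<Rightarrow> 'q) set" where
  "Cset P S r = {t \<in> P \<rightarrow>\<^sub>E P. \<forall>x\<in>P. (x \<in> S \<longrightarrow> t x = x) \<and> (x \<notin> S \<longrightarrow> t x \<in> S \<or> r x < r (t x))}"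

definition Comp :: "'q set \<Rightarrow> 'q set \<Rightarrow> ('q \<Rightarrow> nat) \<Rightarrow> ('q \<Rightarrow> 'q) set" where
  "Comp P S r = {restrict (t2 \<circ> t1) P | t1 t2. t1 \<in> Cset P S r \<and> t2 \<in> Cset P S r}"

lemma Cset_avoid:
  assumes "m \<in> P" "m \<notin> S" "\<forall>x\<in>P - S. r m \<le> r x" "t \<in> Cset P S r" "x \<in> P"
  shows "t x \<noteq> m"
proof
  assume tm: "t x = m"
  have t: "t \<in> Cset P S r" by fact
  show False
  proof (cases "x \<in> S")
    case True thus False using t assms tm by (auto simp: Cset_def)
  next
    case False
    hence "t x \<in> S \<or> r x < r (t x)" using t assms(5) by (auto simp: Cset_def)
    moreover have "r m \<le> r x" using assms False by auto
    ultimately show False using tm assms(2) by auto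
  qed
qed

lemma Cset_finite: "finite P \<Longrightarrow> finite (Cset P S r)"
  by (rule finite_subset[of _ "P \<rightarrow>\<^sub>E P"]) (auto simp: Cset_def intro: finite_PiE)

lemma Cset_sinks: "P \<subseteq> S \<Longrightarrow> Cset P S r \<subseteq> {restrict id P}"
  by (auto simp: Cset_def PiE_iff extensional_def restrict_def fun_eq_iff subset_iff)

lemma Cset_restrict:
  assumes "m \<in> P" "m \<notin> S" "\<forall>x\<in>P - S. r m \<le> r x" "t \<in> Cset P S r"
  shows "restrict t (P - {m}) \<in> Cset (P - {m}) S r"
proof -
  have "\<forall>x\<in>P. t x \<noteq> m" using Cset_avoid[OF assms] by blast
  thus ?thesis using assms(4) unfolding Cset_def by (auto simp: PiE_iff)
qed

lemma min_exists:
  assumes "N \<noteq> {}"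
  obtains m where "m \<in> N" "\<forall>x\<in>N. (r::'q\<Rightarrow>nat) m \<le> r x"
  using assms ex_has_least_nat[of "\<lambda>x. x \<in> N" _ r] by blast

lemma fact_step: "n * fact (n - 1) \<le> (fact n :: nat)"
  by (cases n) auto

lemma inj_split:
  assumes "m \<in> P" "A \<subseteq> P \<rightarrow>\<^sub>E P"
  shows "inj_on (\<lambda>t. (t m, restrict t (P - {m}))) A"
proof (rule inj_onI)
  fix t t' assume "t \<in> A" "t' \<in> A" and eq: "(t m, restrict t (P - {m})) = (t' m, restrict t' (P - {m}))"
  hence e: "t \<in> P \<rightarrow>\<^sub>E P" "t' \<in> P \<rightarrow>\<^sub>E P" using assms by auto
  show "t = t'"
  proof
    fix x show "t x = t' x"
    proof (cases "x \<in> P")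
      case True thus ?thesis using eq by (cases "x = m") (auto simp: fun_eq_iff restrict_def split: if_splits)
    next
      case False thus ?thesis using e by (auto simp: PiE_iff extensional_def)
    qed
  qed
qed

lemma card_Cset_aux: "finite P \<Longrightarrow> card P = n \<Longrightarrow> card (Cset P S r) \<le> fact (n - 1)"
proof (induction n arbitrary: P)
  case 0
  hence "P \<subseteq> S" by simp
  hence "card (Cset P S r) \<le> card {restrict id P}" by (intro card_mono) (auto dest: Cset_sinks)
  thus ?case by simp
next
  case (Suc n)
  show ?case
  proof (cases "P \<subseteq> S")
    case True
    hence "card (Cset P S r) \<le> card {restrict id P}" by (intro card_mono) (auto dest: Cset_sinks)
    hence c: "card (Cset P S r) \<le> 1" by simp
    have f: "(1::nat) \<le> fact (Suc n - 1)" by (rule fact_ge_1)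
    show ?thesis using c f by (rule order_trans)
  next
    case False
    then obtain m where m: "m \<in> P - S" "\<forall>x\<in>P - S. r m \<le> r x"
      using min_exists[of "P - S" r] by blast
    let ?P = "P - {m}"
    have cP: "card ?P = n" "finite ?P" using Suc.prems m by auto
    have "card (Cset P S r) \<le> card (?P \<times> Cset ?P S r)"
    proof (rule card_inj_on_le)
      show "inj_on (\<lambda>t. (t m, restrict t ?P)) (Cset P S r)"
        by (rule inj_split) (use m in \<open>auto simp: Cset_def\<close>)
      show "(\<lambda>t. (t m, restrict t ?P)) ` Cset P S r \<subseteq> ?P \<times> Cset ?P S r"
      proof safe
        fix t assume t: "t \<in> Cset P S r"
        show "t m \<in> P" using t m by (auto simp: Cset_def)
        show "t m = m \<Longrightarrow> False" using Cset_avoid[of m P S r t m] t m by auto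
        show "restrict t ?P \<in> Cset ?P S r" using Cset_restrict[of m P S r t] t m by auto
      qed
      show "finite (?P \<times> Cset ?P S r)" using cP by (auto intro: Cset_finite)
    qed
    also have "\<dots> \<le> n * fact (n - 1)" using Suc.IH[OF cP(2,1)] cP by (simp add: card_cartesian_product)
    also have "\<dots> \<le> fact n" by (rule fact_step)
    finally show ?thesis by simp
  qed
qed

lemma card_Cset: "finite P \<Longrightarrow> card (Cset P S r) \<le> fact (card P - 1)"
  using card_Cset_aux by blast

lemma Comp_finite: "finite P \<Longrightarrow> finite (Comp P S r)"
  by (rule finite_subset[of _ "P \<rightarrow>\<^sub>E P"]) (auto simp: Comp_def Cset_def PiE_iff intro: finite_PiE)

lemma Comp_sinks: "P \<subseteq> S \<Longrightarrow> Comp P S r \<subseteq> {restrict id P}"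
proof
  fix s assume "P \<subseteq> S" "s \<in> Comp P S r"
  then obtain t1 t2 where "t1 \<in> Cset P S r" "t2 \<in> Cset P S r" "s = restrict (t2 \<circ> t1) P"
    by (auto simp: Comp_def)
  moreover have "t1 = restrict id P" "t2 = restrict id P" using calculation Cset_sinks[OF \<open>P \<subseteq> S\<close>, of r] by auto
  ultimately show "s \<in> {restrict id P}" by (auto simp: fun_eq_iff)
qed

lemma fact_step2: "n \<le> 2 * (fact (n - 1) :: nat)"
proof (cases "n \<le> 1")
  case True thus ?thesis using fact_ge_1[of "n - 1", where 'a=nat] by linarith
next
  case False thus ?thesis using fact_ge_self[of "n - 1"] by linarith
qed

lemma card_Comp_aux: "finite P \<Longrightarrow> card P = n \<Longrightarrow> card (Comp P S r) \<le> 2 * fact (n - 2)"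
proof (induction n arbitrary: P)
  case 0
  hence "P \<subseteq> S" by simp
  hence "card (Comp P S r) \<le> card {restrict id P}" by (intro card_mono) (auto dest: Comp_sinks)
  thus ?case by simp
next
  case (Suc n)
  show ?case
  proof (cases "P \<subseteq> S")
    case True
    hence "card (Comp P S r) \<le> card {restrict id P}" by (intro card_mono) (auto dest: Comp_sinks)
    hence c: "card (Comp P S r) \<le> 1" by simp
    have f0: "(1::nat) \<le> fact (Suc n - 2)" by (rule fact_ge_1)
    hence f: "(1::nat) \<le> 2 * fact (Suc n - 2)" by linarith
    show ?thesis using c f by (rule order_trans)
  next
    case False
    then obtain m where m: "m \<in> P - S" "\<forall>x\<in>P - S. r m \<le> r x"
      using min_exists[of "P - S" r] by blast
    let ?P = "P - {m}"
    have cP: "card ?P = n" "finite ?P" using Suc.prems m by auto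
    have img: "restrict s ?P \<in> Comp ?P S r \<and> s m \<in> ?P \<and>
       (\<forall>m'. m' \<in> ?P - S \<and> (\<forall>x\<in>?P - S. r m' \<le> r x) \<longrightarrow> s m \<noteq> m')"
      if s: "s \<in> Comp P S r" for s
    proof -
      obtain t1 t2 where t: "t1 \<in> Cset P S r" "t2 \<in> Cset P S r" "s = restrict (t2 \<circ> t1) P"
        using s by (auto simp: Comp_def)
      have r1: "restrict t1 ?P \<in> Cset ?P S r" and r2: "restrict t2 ?P \<in> Cset ?P S r"
        using Cset_restrict[of m P S r] t m by auto
      have t1m: "t1 m \<in> ?P" using t m Cset_avoid[of m P S r t1 m] by (auto simp: Cset_def)
      have t1P: "\<forall>x\<in>?P. t1 x \<in> ?P" using t m Cset_avoid[of m P S r t1] by (auto simp: Cset_def)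
      have "restrict s ?P = restrict (restrict t2 ?P \<circ> restrict t1 ?P) ?P"
        using t1P t(3) by (auto simp: fun_eq_iff restrict_def)
      hence A: "restrict s ?P \<in> Comp ?P S r" using r1 r2 unfolding Comp_def by blast
      have "t2 (t1 m) \<in> ?P" using t1m t m Cset_avoid[of m P S r t2 "t1 m"] by (auto simp: Cset_def)
      hence B: "s m \<in> ?P" using t(3) m by auto
      have C: "s m \<noteq> m'" if "m' \<in> ?P - S" "\<forall>x\<in>?P - S. r m' \<le> r x" for m'
        using Cset_avoid[of m' ?P S r "restrict t2 ?P" "t1 m"] that r2 t1m t(3) m by auto
      show ?thesis using A B C by blast
    qed
    show ?thesis
    proof (cases "?P \<subseteq> S")
      case True
      have "card (Comp P S r) \<le> card (?P \<times> {restrict id ?P})"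
      proof (rule card_inj_on_le)
        show "inj_on (\<lambda>t. (t m, restrict t ?P)) (Comp P S r)"
          by (rule inj_split) (use m in \<open>auto simp: Comp_def Cset_def\<close>)
        show "(\<lambda>t. (t m, restrict t ?P)) ` Comp P S r \<subseteq> ?P \<times> {restrict id ?P}"
          using img Comp_sinks[OF True, of r] by blast
        show "finite (?P \<times> {restrict id ?P})" using cP by auto
      qed
      also have "\<dots> = n" using cP by simp
      also have "\<dots> \<le> 2 * fact (Suc n - 2)" using fact_step2[of n] by simp
      finally show ?thesis .
    next
      case False
      then obtain m' where m': "m' \<in> ?P - S" "\<forall>x\<in>?P - S. r m' \<le> r x"
        using min_exists[of "?P - S" r] by blast
      have "card (Comp P S r) \<le> card ((?P - {m'}) \<times> Comp ?P S r)"
      proof (rule card_inj_on_le)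
        show "inj_on (\<lambda>t. (t m, restrict t ?P)) (Comp P S r)"
          by (rule inj_split) (use m in \<open>auto simp: Comp_def Cset_def\<close>)
        show "(\<lambda>t. (t m, restrict t ?P)) ` Comp P S r \<subseteq> (?P - {m'}) \<times> Comp ?P S r"
          using img m' by blast
        show "finite ((?P - {m'}) \<times> Comp ?P S r)" using cP by (auto intro: Comp_finite)
      qed
      also have "\<dots> \<le> (n - 1) * (2 * fact (n - 2))"
        using Suc.IH[OF cP(2,1)] cP m' by (simp add: card_cartesian_product)
      also have "\<dots> = 2 * ((n - 1) * fact (n - 1 - 1))" by (metis diff_diff_left one_add_one mult.left_commute)
      also have "\<dots> \<le> 2 * fact (n - 1)" using fact_step[of "n - 1"] by simp
      finally show ?thesis by simp
    qed
  qed
qed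

lemma card_Comp: "finite P \<Longrightarrow> card (Comp P S r) \<le> 2 * fact (card P - 2)"
  using card_Comp_aux by blast


definition deriv :: "'a list \<Rightarrow> 'a list set \<Rightarrow> 'a list set" where
  "deriv x X = {v. x @ v \<in> X}"

definition Qs :: "'a set \<Rightarrow> 'a list set \<Rightarrow> 'a list set set" where
  "Qs \<Sigma> L = {deriv w L | w. w \<in> lists \<Sigma>}"

lemma deriv_append: "deriv (x @ y) X = deriv y (deriv x X)"
  by (simp add: deriv_def)

lemma deriv_Nil[simp]: "deriv [] X = X"
  by (simp add: deriv_def)

lemma Qs_closed: "X \<in> Qs \<Sigma> L \<Longrightarrow> x \<in> lists \<Sigma> \<Longrightarrow> deriv x X \<in> Qs \<Sigma> L"
proof -
  assume "X \<in> Qs \<Sigma> L" "x \<in> lists \<Sigma>"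
  then obtain w where "w \<in> lists \<Sigma>" "X = deriv w L" by (auto simp: Qs_def)
  hence "deriv x X = deriv (w @ x) L" "w @ x \<in> lists \<Sigma>" using \<open>x \<in> lists \<Sigma>\<close> by (auto simp: deriv_append)
  thus ?thesis unfolding Qs_def by blast
qed

lemma L_in_Qs: "L \<in> Qs \<Sigma> L"
  unfolding Qs_def by (auto intro: exI[of _ "[]"])

lemma dfa_fold_in:
  assumes "is_dfa \<Sigma> Q \<delta> q0 Fs" "w \<in> lists \<Sigma>" "q \<in> Q"
  shows "fold (\<lambda>a q. \<delta> q a) w q \<in> Q"
  using assms(2,3)
proof (induction w arbitrary: q)
  case (Cons a w) thus ?case using assms(1) by (auto simp: is_dfa_def)
qed simp

lemma MN_lower:
  assumes dfa: "is_dfa \<Sigma> Q \<delta> q0 Fs" and lang: "dfa_lang \<Sigma> \<delta> q0 Fs = L"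
  shows "card (Qs \<Sigma> L) \<le> card Q"
proof -
  let ?f = "\<lambda>s. {v \<in> lists \<Sigma>. fold (\<lambda>a q. \<delta> q a) v s \<in> Fs}"
  have fin: "finite Q" using dfa by (simp add: is_dfa_def)
  have "Qs \<Sigma> L \<subseteq> ?f ` Q"
  proof
    fix X assume "X \<in> Qs \<Sigma> L"
    then obtain w where w: "w \<in> lists \<Sigma>" "X = deriv w L" by (auto simp: Qs_def)
    have "X = ?f (fold (\<lambda>a q. \<delta> q a) w q0)"
      using w unfolding lang[symmetric] by (auto simp: deriv_def dfa_lang_def)
    moreover have "fold (\<lambda>a q. \<delta> q a) w q0 \<in> Q"
      using dfa_fold_in[OF dfa w(1)] dfa by (auto simp: is_dfa_def)
    ultimately show "X \<in> ?f ` Q" by blast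
  qed
  hence "card (Qs \<Sigma> L) \<le> card (?f ` Q)" using fin by (intro card_mono) auto
  also have "\<dots> \<le> card Q" using fin by (rule card_image_le)
  finally show ?thesis .
qed

lemma MN_upper:
  assumes sub: "L \<subseteq> lists \<Sigma>" and fin: "finite (Qs \<Sigma> L)"
  shows "\<exists>(Q::nat set) \<delta> q0 Fs. is_dfa \<Sigma> Q \<delta> q0 Fs \<and> card Q = card (Qs \<Sigma> L) \<and> dfa_lang \<Sigma> \<delta> q0 Fs = L"
proof -
  let ?m = "card (Qs \<Sigma> L)"
  obtain h where h: "bij_betw h {0..<?m} (Qs \<Sigma> L)" using ex_bij_betw_nat_finite[OF fin] by blast
  have LQ: "L \<in> Qs \<Sigma> L" by (rule L_in_Qs)
  define g where "g = inv_into {0..<?m} h"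
  have gh: "g (h i) = i" if "i < ?m" for i
    using h that unfolding g_def by (auto simp: bij_betw_def inv_into_f_f)
  have hg: "h (g X) = X" "g X < ?m" if "X \<in> Qs \<Sigma> L" for X
  proof -
    have "X \<in> h ` {0..<?m}" using h that by (auto simp: bij_betw_def)
    thus "h (g X) = X" unfolding g_def by (rule f_inv_into_f)
    show "g X < ?m" unfolding g_def using inv_into_into[OF \<open>X \<in> h ` {0..<?m}\<close>] by simp
  qed
  have hQ: "h i \<in> Qs \<Sigma> L" if "i < ?m" for i using h that by (auto simp: bij_betw_def)
  define \<delta> where "\<delta> i a = g (deriv [a] (h i))" for i a
  define Fs where "Fs = {i \<in> {0..<?m}. [] \<in> h i}"
  have key: "fold (\<lambda>a q. \<delta> q a) w i = g (deriv w (h i))" if "w \<in> lists \<Sigma>" "i < ?m" for w i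
    using that
  proof (induction w arbitrary: i)
    case Nil thus ?case by (simp add: gh)
  next
    case (Cons a w)
    have d: "deriv [a] (h i) \<in> Qs \<Sigma> L" using Cons hQ Qs_closed[of "h i" \<Sigma> L "[a]"] by auto
    have "fold (\<lambda>a q. \<delta> q a) (a # w) i = fold (\<lambda>a q. \<delta> q a) w (\<delta> i a)" by simp
    also have "\<dots> = g (deriv w (h (\<delta> i a)))" using Cons d hg by (simp add: \<delta>_def)
    also have "\<dots> = g (deriv (a # w) (h i))" using d hg
      by (simp add: \<delta>_def deriv_append[of "[a]" w, simplified])
    finally show ?case .
  qed
  have dfa: "is_dfa \<Sigma> {0..<?m} \<delta> (g L) Fs"
    unfolding is_dfa_def
  proof (intro conjI ballI)
    show "g L \<in> {0..<?m}" using hg(2)[OF LQ] by simp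
    show "Fs \<subseteq> {0..<?m}" by (auto simp: Fs_def)
    fix q a assume q: "q \<in> {0..<?m}" and a: "a \<in> \<Sigma>"
    have "deriv [a] (h q) \<in> Qs \<Sigma> L" using Qs_closed[OF hQ, of q "[a]"] q a by auto
    thus "\<delta> q a \<in> {0..<?m}" using hg(2) by (simp add: \<delta>_def)
  qed simp
  have "dfa_lang \<Sigma> \<delta> (g L) Fs = L"
  proof -
    have "w \<in> L \<longleftrightarrow> fold (\<lambda>a q. \<delta> q a) w (g L) \<in> Fs" if w: "w \<in> lists \<Sigma>" for w
    proof -
      have gL: "g L < ?m" "h (g L) = L" using hg[OF LQ] by auto
      have dw: "deriv w L \<in> Qs \<Sigma> L" using Qs_closed[OF LQ w] .
      have "fold (\<lambda>a q. \<delta> q a) w (g L) = g (deriv w L)" using key[OF w gL(1)] gL by simp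
      thus ?thesis using hg[OF dw] by (simp add: Fs_def deriv_def)
    qed
    thus ?thesis using sub by (auto simp: dfa_lang_def)
  qed
  note lang = this
  show ?thesis
    apply (rule exI[of _ "{0..<?m}"], rule exI[of _ \<delta>], rule exI[of _ "g L"], rule exI[of _ Fs])
    apply (rule conjI, rule dfa)
    apply (rule conjI, simp)
    by (rule lang)
qed

lemma MN:
  assumes "L \<subseteq> lists \<Sigma>" "finite (Qs \<Sigma> L)"
  shows "state_complexity \<Sigma> L = card (Qs \<Sigma> L)"
  unfolding state_complexity_def
proof (rule Least_equality)
  show "\<exists>(Q::nat set) \<delta> q0 Fs. is_dfa \<Sigma> Q \<delta> q0 Fs \<and> card Q = card (Qs \<Sigma> L) \<and> dfa_lang \<Sigma> \<delta> q0 Fs = L"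
    by (rule MN_upper[OF assms])
  fix y assume "\<exists>(Q::nat set) \<delta> q0 Fs. is_dfa \<Sigma> Q \<delta> q0 Fs \<and> card Q = y \<and> dfa_lang \<Sigma> \<delta> q0 Fs = L"
  then obtain Q :: "nat set" and \<delta> q0 Fs where "is_dfa \<Sigma> Q \<delta> q0 Fs" "card Q = y" "dfa_lang \<Sigma> \<delta> q0 Fs = L"
    by blast
  thus "card (Qs \<Sigma> L) \<le> y" using MN_lower[of \<Sigma> Q \<delta> q0 Fs L] by simp
qed

lemma quot_card:
  assumes "A \<subseteq> B" "r = {(x,y). x \<in> B \<and> y \<in> B \<and> f x = f y}"
  shows "card (A // r) = card (f ` A)"
proof -
  have "A // r = (\<lambda>z. {y \<in> B. f y = z}) ` (f ` A)"
  proof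
    show "A // r \<subseteq> (\<lambda>z. {y \<in> B. f y = z}) ` (f ` A)"
    proof
      fix c assume "c \<in> A // r"
      then obtain x where x: "x \<in> A" "c = r `` {x}" unfolding quotient_def by blast
      hence "c = {y \<in> B. f y = f x}" using assms by auto
      thus "c \<in> (\<lambda>z. {y \<in> B. f y = z}) ` (f ` A)" using x(1) by blast
    qed
    show "(\<lambda>z. {y \<in> B. f y = z}) ` (f ` A) \<subseteq> A // r"
    proof
      fix c assume "c \<in> (\<lambda>z. {y \<in> B. f y = z}) ` (f ` A)"
      then obtain x where x: "x \<in> A" "c = {y \<in> B. f y = f x}" by blast
      hence "c = r `` {x}" using assms by auto
      thus "c \<in> A // r" using x(1) unfolding quotient_def by blast
    qed
  qed
  moreover have "inj_on (\<lambda>z. {y \<in> B. f y = z}) (f ` A)"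
    using assms(1) by (rule_tac inj_onI) (auto simp: set_eq_iff)
  ultimately show ?thesis by (simp add: card_image)
qed

lemma syn_card:
  assumes "\<forall>x\<in>lists \<Sigma>. \<forall>y\<in>lists \<Sigma>. (\<forall>u\<in>lists \<Sigma>. \<forall>v\<in>lists \<Sigma>. u @ x @ v \<in> L \<longleftrightarrow> u @ y @ v \<in> L) \<longleftrightarrow> h x = h y"
  shows "syntactic_complexity \<Sigma> L = card (h ` (lists \<Sigma> - {[]}))"
proof -
  have "syntactic_cong \<Sigma> L = {(x,y). x \<in> lists \<Sigma> \<and> y \<in> lists \<Sigma> \<and> h x = h y}"
    using assms unfolding syntactic_cong_def by auto
  thus ?thesis unfolding syntactic_complexity_def by (intro quot_card) auto
qed

lemma syn_deriv:
  assumes sub: "L \<subseteq> lists \<Sigma>" and x: "x \<in> lists \<Sigma>" and y: "y \<in> lists \<Sigma>"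
  shows "(\<forall>u\<in>lists \<Sigma>. \<forall>v\<in>lists \<Sigma>. u @ x @ v \<in> L \<longleftrightarrow> u @ y @ v \<in> L) \<longleftrightarrow>
         restrict (\<lambda>X. deriv x X) (Qs \<Sigma> L) = restrict (\<lambda>X. deriv y X) (Qs \<Sigma> L)"
proof
  assume H: "\<forall>u\<in>lists \<Sigma>. \<forall>v\<in>lists \<Sigma>. u @ x @ v \<in> L \<longleftrightarrow> u @ y @ v \<in> L"
  show "restrict (\<lambda>X. deriv x X) (Qs \<Sigma> L) = restrict (\<lambda>X. deriv y X) (Qs \<Sigma> L)"
  proof
    fix X show "restrict (\<lambda>X. deriv x X) (Qs \<Sigma> L) X = restrict (\<lambda>X. deriv y X) (Qs \<Sigma> L) X"
    proof (cases "X \<in> Qs \<Sigma> L")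
      case True
      then obtain u where u: "u \<in> lists \<Sigma>" "X = deriv u L" by (auto simp: Qs_def)
      have "deriv x X = deriv y X"
      proof (auto simp: u deriv_def)
        fix v assume "u @ x @ v \<in> L"
        hence "v \<in> lists \<Sigma>" using sub by auto
        thus "u @ y @ v \<in> L" using H u \<open>u @ x @ v \<in> L\<close> by blast
      next
        fix v assume "u @ y @ v \<in> L"
        hence "v \<in> lists \<Sigma>" using sub by auto
        thus "u @ x @ v \<in> L" using H u \<open>u @ y @ v \<in> L\<close> by blast
      qed
      thus ?thesis using True by simp
    qed simp
  qed
next
  assume H: "restrict (\<lambda>X. deriv x X) (Qs \<Sigma> L) = restrict (\<lambda>X. deriv y X) (Qs \<Sigma> L)"
  show "\<forall>u\<in>lists \<Sigma>. \<forall>v\<in>lists \<Sigma>. u @ x @ v \<in> L \<longleftrightarrow> u @ y @ v \<in> L"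
  proof (intro ballI)
    fix u v assume u: "u \<in> lists \<Sigma>" and "v \<in> lists \<Sigma>"
    have "deriv u L \<in> Qs \<Sigma> L" using u by (auto simp: Qs_def)
    hence "deriv x (deriv u L) = deriv y (deriv u L)" using H by (metis restrict_apply')
    thus "u @ x @ v \<in> L \<longleftrightarrow> u @ y @ v \<in> L" by (auto simp: deriv_def set_eq_iff)
  qed
qed


lemma rd_sub: "reverse_definite \<Sigma> L \<Longrightarrow> L \<subseteq> lists \<Sigma>"
  unfolding reverse_definite_def by (fastforce simp: subset_iff)

lemma rd_sink:
  assumes rd: "reverse_definite \<Sigma> L"
  shows "\<exists>k. \<forall>w\<in>lists \<Sigma>. k \<le> length w \<longrightarrow> deriv w L = {} \<or> deriv w L = lists \<Sigma>"
proof -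
  obtain E F where EF: "finite E" "finite F" "E \<subseteq> lists \<Sigma>" "F \<subseteq> lists \<Sigma>"
    "L = E \<union> {f @ w | f w. f \<in> F \<and> w \<in> lists \<Sigma>}"
    using rd unfolding reverse_definite_def by blast
  have sub: "L \<subseteq> lists \<Sigma>" using rd_sub[OF rd] .
  define k where "k = Suc (Max (length ` (E \<union> F)))"
  have kb: "length u < k" if "u \<in> E \<union> F" for u
    using that EF(1,2) unfolding k_def by (simp add: le_imp_less_Suc)
  show ?thesis
  proof (intro exI ballI impI)
    fix w assume w: "w \<in> lists \<Sigma>" and lw: "k \<le> length w"
    show "deriv w L = {} \<or> deriv w L = lists \<Sigma>"
    proof (cases "\<exists>f\<in>F. \<exists>z. w = f @ z")
      case True
      then obtain f z where fz: "f \<in> F" "w = f @ z" by blast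
      have "deriv w L = lists \<Sigma>"
      proof
        show "deriv w L \<subseteq> lists \<Sigma>" using sub by (auto simp: deriv_def)
        show "lists \<Sigma> \<subseteq> deriv w L"
        proof
          fix v assume v: "v \<in> lists \<Sigma>"
          have "z @ v \<in> lists \<Sigma>" using w v fz by auto
          moreover have "w @ v = f @ (z @ v)" using fz by simp
          ultimately have "w @ v \<in> L" using fz(1) EF(5) by blast
          thus "v \<in> deriv w L" by (simp add: deriv_def)
        qed
      qed
      thus ?thesis by simp
    next
      case False
      have "deriv w L = {}"
      proof (rule ccontr)
        assume "deriv w L \<noteq> {}"
        then obtain v where v: "w @ v \<in> L" by (auto simp: deriv_def)
        show False
        proof (cases "w @ v \<in> E")
          case True thus False using kb[of "w @ v"] lw by auto
        next
          case False
          then obtain f u where fu: "f \<in> F" "w @ v = f @ u" using v EF(5) by auto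
          have lf: "length f \<le> length w" using kb[of f] fu lw by auto
          have "f = take (length f) (w @ v)" using fu by (metis append_eq_conv_conj)
          hence "f = take (length f) w" using lf by simp
          hence "w = f @ drop (length f) w" by (metis append_take_drop_id)
          thus False using \<open>\<not> (\<exists>f\<in>F. \<exists>z. w = f @ z)\<close> fu by blast
        qed
      qed
      thus ?thesis by simp
    qed
  qed
qed

lemma rd_finite:
  assumes fin: "finite \<Sigma>" and k: "\<forall>w\<in>lists \<Sigma>. k \<le> length w \<longrightarrow> deriv w L = {} \<or> deriv w L = lists \<Sigma>"
  shows "finite (Qs \<Sigma> L)"
proof -
  have "Qs \<Sigma> L \<subseteq> {{}, lists \<Sigma>} \<union> (\<lambda>w. deriv w L) ` {w. set w \<subseteq> \<Sigma> \<and> length w \<le> k}"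
  proof
    fix X assume "X \<in> Qs \<Sigma> L"
    then obtain w where w: "w \<in> lists \<Sigma>" "X = deriv w L" by (auto simp: Qs_def)
    show "X \<in> {{}, lists \<Sigma>} \<union> (\<lambda>w. deriv w L) ` {w. set w \<subseteq> \<Sigma> \<and> length w \<le> k}"
    proof (cases "k \<le> length w")
      case True thus ?thesis using k w by auto
    next
      case False thus ?thesis using w by auto
    qed
  qed
  moreover have "finite ({{}, lists \<Sigma>} \<union> (\<lambda>w. deriv w L) ` {w. set w \<subseteq> \<Sigma> \<and> length w \<le> k})"
    using finite_lists_length_le[OF fin, of k] by auto
  ultimately show ?thesis by (rule finite_subset)
qed

definition rk :: "'a set \<Rightarrow> 'a list set \<Rightarrow> nat \<Rightarrow> 'a list set \<Rightarrow> nat" where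
  "rk \<Sigma> L k X = Max (length ` {w \<in> lists \<Sigma>. deriv w L = X \<and> length w < k})"

lemma T_sub_Cset:
  assumes sub: "L \<subseteq> lists \<Sigma>"
    and k: "\<forall>w\<in>lists \<Sigma>. k \<le> length w \<longrightarrow> deriv w L = {} \<or> deriv w L = lists \<Sigma>"
  shows "(\<lambda>x. restrict (\<lambda>X. deriv x X) (Qs \<Sigma> L)) ` (lists \<Sigma> - {[]}) \<subseteq> Cset (Qs \<Sigma> L) {{}, lists \<Sigma>} (rk \<Sigma> L k)"
proof
  fix t assume "t \<in> (\<lambda>x. restrict (\<lambda>X. deriv x X) (Qs \<Sigma> L)) ` (lists \<Sigma> - {[]})"
  then obtain x where x: "x \<in> lists \<Sigma>" "x \<noteq> []" and t: "t = restrict (\<lambda>X. deriv x X) (Qs \<Sigma> L)" by blast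
  let ?S = "{{}, lists \<Sigma>}"
  have "t \<in> Qs \<Sigma> L \<rightarrow>\<^sub>E Qs \<Sigma> L" using t x Qs_closed by auto
  moreover have "\<forall>X\<in>Qs \<Sigma> L. (X \<in> ?S \<longrightarrow> t X = X) \<and> (X \<notin> ?S \<longrightarrow> t X \<in> ?S \<or> rk \<Sigma> L k X < rk \<Sigma> L k (t X))"
  proof (intro ballI conjI impI)
    fix X assume X: "X \<in> Qs \<Sigma> L"
    { assume "X \<in> ?S"
      thus "t X = X" using X t x by (auto simp: deriv_def) }
    assume nS: "X \<notin> ?S"
    show "t X \<in> ?S \<or> rk \<Sigma> L k X < rk \<Sigma> L k (t X)"
    proof (cases "t X \<in> ?S")
    case True thus ?thesis by simp
    next
    case False note tS = this
    let ?W = "\<lambda>Y. {w \<in> lists \<Sigma>. deriv w L = Y \<and> length w < k}"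
    have finW: "finite (length ` ?W Y)" for Y by (rule finite_subset[of _ "{..<k}"]) auto
    obtain w0 where w0: "w0 \<in> lists \<Sigma>" "deriv w0 L = X" using X by (auto simp: Qs_def)
    have "length w0 < k" using k w0 nS by (metis insert_iff not_le)
    hence ne: "?W X \<noteq> {}" using w0 by auto
    have "rk \<Sigma> L k X \<in> length ` ?W X" unfolding rk_def using finW ne by (intro Max_in) auto
    then obtain w where "w \<in> ?W X" "rk \<Sigma> L k X = length w" by blast
    hence w: "w \<in> lists \<Sigma>" "deriv w L = X" "length w < k" "length w = rk \<Sigma> L k X" by auto
    have tX: "t X = deriv (w @ x) L" using X t w by (simp add: deriv_append)
    have wx: "w @ x \<in> lists \<Sigma>" using w x by simp
    have "length (w @ x) < k" using k wx tS tX by (metis insert_iff not_le)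
    hence "length (w @ x) \<in> length ` ?W (t X)" using wx tX by blast
    hence "length (w @ x) \<le> rk \<Sigma> L k (t X)" unfolding rk_def using finW by (rule Max_ge[rotated])
    moreover have "length x > 0" using x by simp
    moreover have "length (w @ x) = length w + length x" by simp
    ultimately have "rk \<Sigma> L k X < rk \<Sigma> L k (t X)" using w(4) by linarith
    thus ?thesis by simp
    qed
  qed
  ultimately show "t \<in> Cset (Qs \<Sigma> L) ?S (rk \<Sigma> L k)" unfolding Cset_def by blast
qed

lemma part1:
  assumes fin: "finite \<Sigma>" and rd: "reverse_definite \<Sigma> L"
  shows "syntactic_complexity \<Sigma> L \<le> fact (state_complexity \<Sigma> L - 1)"
proof -
  have sub: "L \<subseteq> lists \<Sigma>" by (rule rd_sub[OF rd])
  obtain k where k: "\<forall>w\<in>lists \<Sigma>. k \<le> length w \<longrightarrow> deriv w L = {} \<or> deriv w L = lists \<Sigma>"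
    using rd_sink[OF rd] by blast
  have finQ: "finite (Qs \<Sigma> L)" by (rule rd_finite[OF fin k])
  have sc: "state_complexity \<Sigma> L = card (Qs \<Sigma> L)" by (rule MN[OF sub finQ])
  have sy: "syntactic_complexity \<Sigma> L = card ((\<lambda>x. restrict (\<lambda>X. deriv x X) (Qs \<Sigma> L)) ` (lists \<Sigma> - {[]}))"
    by (rule syn_card) (use syn_deriv[OF sub] in blast)
  have "card ((\<lambda>x. restrict (\<lambda>X. deriv x X) (Qs \<Sigma> L)) ` (lists \<Sigma> - {[]})) \<le> card (Cset (Qs \<Sigma> L) {{}, lists \<Sigma>} (rk \<Sigma> L k))"
    by (rule card_mono[OF Cset_finite[OF finQ] T_sub_Cset[OF sub k]])
  also have "\<dots> \<le> fact (card (Qs \<Sigma> L) - 1)" by (rule card_Cset[OF finQ])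
  finally show ?thesis using sc sy by simp
qed

lemma part3:
  assumes fin: "finite \<Sigma>" and rd: "reverse_definite \<Sigma> L"
    and eq: "syntactic_complexity \<Sigma> L = fact (state_complexity \<Sigma> L - 1)"
  shows "fact (state_complexity \<Sigma> L - 1) - 2 * fact (state_complexity \<Sigma> L - 2) \<le> card \<Sigma>"
proof -
  have sub: "L \<subseteq> lists \<Sigma>" by (rule rd_sub[OF rd])
  obtain k where k: "\<forall>w\<in>lists \<Sigma>. k \<le> length w \<longrightarrow> deriv w L = {} \<or> deriv w L = lists \<Sigma>"
    using rd_sink[OF rd] by blast
  let ?Q = "Qs \<Sigma> L" and ?S = "{{}, lists \<Sigma>}" and ?r = "rk \<Sigma> L k"
  let ?T = "(\<lambda>x. restrict (\<lambda>X. deriv x X) ?Q) ` (lists \<Sigma> - {[]})"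
  have finQ: "finite ?Q" by (rule rd_finite[OF fin k])
  have sc: "state_complexity \<Sigma> L = card ?Q" by (rule MN[OF sub finQ])
  have sy: "syntactic_complexity \<Sigma> L = card ?T"
    by (rule syn_card) (use syn_deriv[OF sub] in blast)
  have TC: "?T \<subseteq> Cset ?Q ?S ?r" by (rule T_sub_Cset[OF sub k])
  have "card (Cset ?Q ?S ?r) \<le> card ?T" using card_Cset[OF finQ, of ?S ?r] eq sc sy by simp
  hence Teq: "?T = Cset ?Q ?S ?r" using card_seteq[OF Cset_finite[OF finQ] TC] by simp
  let ?Lt = "(\<lambda>a. restrict (\<lambda>X. deriv [a] X) ?Q) ` \<Sigma>"
  have "Cset ?Q ?S ?r \<subseteq> ?Lt \<union> Comp ?Q ?S ?r"
  proof
    fix t assume "t \<in> Cset ?Q ?S ?r"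
    hence "t \<in> ?T" using Teq by simp
    then obtain x where x: "x \<in> lists \<Sigma>" "x \<noteq> []" and t: "t = restrict (\<lambda>X. deriv x X) ?Q" by blast
    then obtain a x' where ax: "x = a # x'" by (cases x) auto
    show "t \<in> ?Lt \<union> Comp ?Q ?S ?r"
    proof (cases "x' = []")
      case True thus ?thesis using ax x t by auto
    next
      case False
      have t1: "restrict (\<lambda>X. deriv [a] X) ?Q \<in> Cset ?Q ?S ?r" using Teq ax x by auto
      have t2: "restrict (\<lambda>X. deriv x' X) ?Q \<in> Cset ?Q ?S ?r" using Teq ax x False by auto
      have "t = restrict (restrict (\<lambda>X. deriv x' X) ?Q \<circ> restrict (\<lambda>X. deriv [a] X) ?Q) ?Q"
      proof
        fix X show "t X = restrict (restrict (\<lambda>X. deriv x' X) ?Q \<circ> restrict (\<lambda>X. deriv [a] X) ?Q) ?Q X"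
        proof (cases "X \<in> ?Q")
          case True
          have "deriv [a] X \<in> ?Q" using Qs_closed[OF True, of "[a]"] ax x by auto
          thus ?thesis using True t ax deriv_append[of "[a]" x' X] by simp
        qed (simp add: t)
      qed
      hence "t \<in> Comp ?Q ?S ?r" using t1 t2 unfolding Comp_def by blast
      thus ?thesis by simp
    qed
  qed
  hence "card (Cset ?Q ?S ?r) \<le> card (?Lt \<union> Comp ?Q ?S ?r)"
    using fin finQ by (intro card_mono) (auto intro: Comp_finite)
  also have "\<dots> \<le> card ?Lt + card (Comp ?Q ?S ?r)" by (rule card_Un_le)
  also have "\<dots> \<le> card \<Sigma> + 2 * fact (card ?Q - 2)"
    using card_image_le[OF fin] card_Comp[OF finQ] by (intro add_mono) auto
  finally have "card (Cset ?Q ?S ?r) \<le> card \<Sigma> + 2 * fact (card ?Q - 2)" .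
  moreover have "card (Cset ?Q ?S ?r) = fact (card ?Q - 1)" using Teq eq sc sy by simp
  ultimately show ?thesis using sc by simp
qed


definition CC :: "nat \<Rightarrow> (nat \<Rightarrow> nat) set" where
  "CC n = {t \<in> {0..<n} \<rightarrow>\<^sub>E {0..<n}. \<forall>i<n. (n - 2 \<le> i \<longrightarrow> t i = i) \<and> (i < n - 2 \<longrightarrow> i < t i)}"

definition gg :: "nat \<Rightarrow> nat \<Rightarrow> nat" where
  "gg n = restrict (\<lambda>j. if j < n - 2 then j + 1 else j) {0..<n}"

definition gg' :: "nat \<Rightarrow> nat \<Rightarrow> nat" where
  "gg' n = restrict (\<lambda>j. if j < n - 3 then j + 1 else if j = n - 3 then n - 1 else j) {0..<n}"

lemma gg_in: "3 \<le> n \<Longrightarrow> gg n \<in> CC n"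
  by (auto simp: CC_def gg_def)

lemma gg'_in: "3 \<le> n \<Longrightarrow> gg' n \<in> CC n"
  by (auto simp: CC_def gg'_def)

lemma gg_iter: "3 \<le> n \<Longrightarrow> i \<le> n - 2 \<Longrightarrow> (gg n ^^ k) i = min (i + k) (n - 2)"
  by (induction k) (auto simp: gg_def)

lemma gg'_iter: "3 \<le> n \<Longrightarrow> i \<le> n - 3 \<Longrightarrow> (gg' n ^^ k) i = (if i + k \<le> n - 3 then i + k else n - 1)"
  by (induction k) (auto simp: gg'_def)

lemma construct:
  assumes n: "3 \<le> n" and AC: "A \<subseteq> CC n" and finA: "finite A" and g: "gg n \<in> A" and g': "gg' n \<in> A"
    and gen: "\<forall>s\<in>CC n. s \<in> A \<or> (\<exists>t1\<in>A. \<exists>t2\<in>A. s = restrict (t2 \<circ> t1) {0..<n})"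
  shows "\<exists>(\<Sigma>::nat set) L. finite \<Sigma> \<and> \<Sigma> \<noteq> {} \<and> reverse_definite \<Sigma> L \<and> card \<Sigma> = card A \<and>
           state_complexity \<Sigma> L = n \<and> syntactic_complexity \<Sigma> L = card (CC n)"
proof -
  let ?N = "card A"
  obtain enc where enc: "bij_betw enc {0..<?N} A" using ex_bij_betw_nat_finite[OF finA] by blast
  define \<Sigma> where "\<Sigma> = {0..<?N}"
  have encC: "enc a \<in> CC n" if "a \<in> \<Sigma>" for a using enc AC that by (auto simp: bij_betw_def \<Sigma>_def)
  have encP1: "enc a i < n" if "a \<in> \<Sigma>" "i < n" for a i
    using encC[OF that(1)] that(2) by (auto simp: CC_def PiE_iff)
  have encP2: "enc a i = i" if "a \<in> \<Sigma>" "i < n" "n - 2 \<le> i" for a i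
    using encC[OF that(1)] that(2,3) by (auto simp: CC_def PiE_iff)
  have encP3: "i < enc a i" if "a \<in> \<Sigma>" "i < n - 2" for a i
    using encC[OF that(1)] that(2) by (auto simp: CC_def PiE_iff)
  define run where "run w i = fold (\<lambda>a q. enc a q) w i" for w i
  have run_Nil[simp]: "run [] i = i" for i by (simp add: run_def)
  have run_Cons: "run (a # w) i = run w (enc a i)" for a w i by (simp add: run_def)
  have run1: "run [a] = enc a" for a by (rule ext) (simp add: run_def)
  have run2: "run [a, b] = enc b \<circ> enc a" for a b by (rule ext) (simp add: run_def)
  have run_app: "run (w @ v) i = run v (run w i)" for w v i by (simp add: run_def)
  have R1: "w \<in> lists \<Sigma> \<Longrightarrow> i < n \<Longrightarrow> run w i < n \<and> i \<le> run w i" for w i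
  proof (induction w arbitrary: i)
    case (Cons a w)
    have a: "a \<in> \<Sigma>" "i < n" using Cons.prems by auto
    have "enc a i < n" using encP1[OF a] .
    moreover have "i \<le> enc a i"
    proof (cases "i < n - 2")
      case True thus ?thesis using encP3[OF a(1) True] by simp
    next
      case False thus ?thesis using encP2[OF a] by simp
    qed
    ultimately have "enc a i < n" "i \<le> enc a i" by auto
    thus ?case using Cons.IH[of "enc a i"] Cons.prems by (auto simp: run_Cons)
  qed simp
  have R2: "w \<in> lists \<Sigma> \<Longrightarrow> n - 2 \<le> i \<Longrightarrow> i < n \<Longrightarrow> run w i = i" for w i
    by (induction w) (auto simp: run_Cons encP2)
  have R4: "w \<in> lists \<Sigma> \<Longrightarrow> i < n \<Longrightarrow> min (i + length w) (n - 2) \<le> run w i" for w i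
  proof (induction w arbitrary: i)
    case (Cons a w)
    show ?case
    proof (cases "i < n - 2")
      case True
      hence "i < enc a i" "enc a i < n" using encP1 encP3 Cons.prems by auto
      thus ?thesis using Cons.IH[of "enc a i"] Cons.prems by (auto simp: run_Cons)
    next
      case False
      thus ?thesis using R2[of "a # w" i] Cons.prems by auto
    qed
  qed simp
  have R6: "i < run x i" if xx: "x \<in> lists \<Sigma>" "x \<noteq> []" "i < n - 2" for x i
  proof -
    obtain a x' where ax: "x = a # x'" using xx(2) by (cases x) auto
    have "i < enc a i" "enc a i < n" using encP1[of a i] encP3[of a i] xx ax by auto
    thus ?thesis using R1[of x' "enc a i"] ax xx by (auto simp: run_Cons)
  qed
  define L where "L = {w \<in> lists \<Sigma>. run w 0 = n - 1}"
  have sub: "L \<subseteq> lists \<Sigma>" by (auto simp: L_def)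
  have finS: "finite \<Sigma>" by (simp add: \<Sigma>_def)
  define F where "F = {w \<in> lists \<Sigma>. length w \<le> n - 2 \<and> run w 0 = n - 1}"
  have rd: "reverse_definite \<Sigma> L"
    unfolding reverse_definite_def
  proof (rule exI[of _ "{}"], rule exI[of _ F], intro conjI)
    show "finite F" unfolding F_def
      by (rule finite_subset[OF _ finite_lists_length_le[OF finS, of "n - 2"]]) auto
    show "F \<subseteq> lists \<Sigma>" by (auto simp: F_def)
    show "L = {} \<union> {f @ w |f w. f \<in> F \<and> w \<in> lists \<Sigma>}"
    proof (intro equalityI subsetI)
      fix w assume w: "w \<in> L"
      show "w \<in> {} \<union> {f @ w |f w. f \<in> F \<and> w \<in> lists \<Sigma>}"
      proof (cases "length w \<le> n - 2")
        case True
        hence "w \<in> F" using w by (auto simp: F_def L_def)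
        moreover have "w = w @ []" "[] \<in> lists \<Sigma>" by auto
        ultimately show ?thesis by blast
      next
        case False
        let ?f = "take (n - 2) w" and ?v = "drop (n - 2) w"
        have wl: "w \<in> lists \<Sigma>" using w by (simp add: L_def)
        have fl: "?f \<in> lists \<Sigma>" "?v \<in> lists \<Sigma>" using wl by (auto dest: in_set_takeD in_set_dropD)
        have lf: "length ?f = n - 2" using False by simp
        have r1: "n - 2 \<le> run ?f 0" "run ?f 0 < n" using R4[OF fl(1), of 0] R1[OF fl(1), of 0] lf n by auto
        have "run w 0 = run ?v (run ?f 0)" using run_app[of ?f ?v 0] by simp
        also have "\<dots> = run ?f 0" using R2[OF fl(2) r1] .
        finally have "run ?f 0 = n - 1" using w by (simp add: L_def)
        hence "?f \<in> F" using fl lf by (simp add: F_def)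
        moreover have "w = ?f @ ?v" by simp
        ultimately show ?thesis using fl(2) by blast
      qed
    next
      fix w assume "w \<in> {} \<union> {f @ w |f w. f \<in> F \<and> w \<in> lists \<Sigma>}"
      then obtain f v where fv: "w = f @ v" "f \<in> F" "v \<in> lists \<Sigma>" by auto
      have "run f 0 = n - 1" "f \<in> lists \<Sigma>" using fv by (auto simp: F_def)
      hence "run w 0 = n - 1" using R2[OF fv(3), of "n - 1"] n fv(1) run_app by simp
      thus "w \<in> L" using fv \<open>f \<in> lists \<Sigma>\<close> by (simp add: L_def)
    qed
  qed auto
  have encS: "enc ` \<Sigma> = A" using enc by (simp add: bij_betw_def \<Sigma>_def)
  obtain a0 where a0: "a0 \<in> \<Sigma>" "enc a0 = gg n" using g encS by (metis imageE)
  obtain a1 where a1: "a1 \<in> \<Sigma>" "enc a1 = gg' n" using g' encS by (metis imageE)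
  have rep0: "run (replicate k a0) i = (gg n ^^ k) i" for k i
    by (simp add: run_def a0(2))
  have rep1: "run (replicate k a1) i = (gg' n ^^ k) i" for k i
    by (simp add: run_def a1(2))
  have lrep: "replicate k a \<in> lists \<Sigma>" if "a \<in> \<Sigma>" for k a using that by auto
  define lng where "lng i = {v \<in> lists \<Sigma>. run v i = n - 1}" for i
  have lng_inj: "lng i \<noteq> lng j" if ij: "i < j" "j < n" for i j
  proof -
    have "run v (n - 1) = n - 1" if "v \<in> lists \<Sigma>" for v using R2[OF that, of "n - 1"] n by simp
    hence lngo: "lng (n - 1) = lists \<Sigma>" by (auto simp: lng_def)
    show ?thesis
    proof (cases "j = n - 1")
      case True
      show ?thesis
      proof (cases "i = n - 2")
        case True
        have "[] \<notin> lng i" using True n by (simp add: lng_def)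
        thus ?thesis using lngo \<open>j = n - 1\<close> by auto
      next
        case False
        hence i3: "i \<le> n - 3" using ij True by linarith
        have "run (replicate (n - 2 - i) a0) i = n - 2" using rep0 gg_iter[OF n, of i] i3 by simp
        hence "replicate (n - 2 - i) a0 \<notin> lng i" using n by (auto simp: lng_def)
        thus ?thesis using lngo True lrep[OF a0(1)] by auto
      qed
    next
      case False
      show ?thesis
      proof (cases "j = n - 2")
        case True
        have "lng j = {}" using R2 True n by (auto simp: lng_def)
        moreover have i3: "i \<le> n - 3" using ij True by linarith
        hence "run (replicate (n - 2 - i) a1) i = n - 1" using rep1 gg'_iter[OF n i3, of "n - 2 - i"] n by auto
        hence "replicate (n - 2 - i) a1 \<in> lng i" using lrep[OF a1(1)] by (simp add: lng_def)
        ultimately show ?thesis by auto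
      next
        case False
        hence j3: "j \<le> n - 3" using \<open>j \<noteq> n - 1\<close> ij by linarith
        have "run (replicate (n - 2 - j) a1) j = n - 1" using rep1 gg'_iter[OF n j3, of "n - 2 - j"] j3 n by auto
        hence "replicate (n - 2 - j) a1 \<in> lng j" using lrep[OF a1(1)] by (simp add: lng_def)
        moreover have "run (replicate (n - 2 - j) a1) i = i + (n - 2 - j)"
          using rep1 gg'_iter[OF n, of i "n - 2 - j"] j3 ij n by auto
        hence "replicate (n - 2 - j) a1 \<notin> lng i" using ij j3 by (auto simp: lng_def)
        ultimately show ?thesis by auto
      qed
    qed
  qed
  have inj: "inj_on lng {0..<n}"
  proof (rule inj_onI)
    fix i j assume "i \<in> {0..<n}" "j \<in> {0..<n}" "lng i = lng j"
    thus "i = j" using lng_inj by (metis atLeastLessThan_iff linorder_neqE_nat)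
  qed
  have reach: "\<exists>w\<in>lists \<Sigma>. run w 0 = i" if "i < n" for i
  proof (cases "i \<le> n - 2")
    case True
    hence "run (replicate i a0) 0 = i" using rep0 gg_iter[OF n, of 0 i] by simp
    thus ?thesis using lrep[OF a0(1)] by blast
  next
    case False
    hence "i = n - 1" using that by linarith
    hence "run (replicate (n - 2) a1) 0 = i" using rep1 gg'_iter[OF n, of 0 "n - 2"] n by auto
    thus ?thesis using lrep[OF a1(1)] by blast
  qed
  have derivL: "deriv w L = lng (run w 0)" if "w \<in> lists \<Sigma>" for w
    using that by (auto simp: deriv_def L_def lng_def run_app)
  have QsE: "Qs \<Sigma> L = lng ` {0..<n}"
  proof
    show "Qs \<Sigma> L \<subseteq> lng ` {0..<n}"
    proof
      fix X assume "X \<in> Qs \<Sigma> L"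
      then obtain w where w: "w \<in> lists \<Sigma>" "X = deriv w L" by (auto simp: Qs_def)
      have "run w 0 < n" using R1[OF w(1), of 0] n by simp
      thus "X \<in> lng ` {0..<n}" using derivL[OF w(1)] w(2) by auto
    qed
    show "lng ` {0..<n} \<subseteq> Qs \<Sigma> L"
    proof
      fix X assume "X \<in> lng ` {0..<n}"
      then obtain i where i: "i < n" "X = lng i" by auto
      then obtain w where "w \<in> lists \<Sigma>" "run w 0 = i" using reach by blast
      thus "X \<in> Qs \<Sigma> L" using derivL i unfolding Qs_def by auto
    qed
  qed
  have cardQ: "card (Qs \<Sigma> L) = n" using QsE inj by (simp add: card_image)
  have sc: "state_complexity \<Sigma> L = n" using MN[OF sub] QsE cardQ by simp
  define h where "h x = restrict (\<lambda>i. run x i) {0..<n}" for x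
  have memL: "u @ x @ v \<in> L \<longleftrightarrow> v \<in> lng (run x (run u 0))"
    if "u \<in> lists \<Sigma>" "x \<in> lists \<Sigma>" for u x v
    using that by (auto simp: L_def lng_def run_app)
  have cond: "\<forall>x\<in>lists \<Sigma>. \<forall>y\<in>lists \<Sigma>. (\<forall>u\<in>lists \<Sigma>. \<forall>v\<in>lists \<Sigma>. u @ x @ v \<in> L \<longleftrightarrow> u @ y @ v \<in> L) \<longleftrightarrow> h x = h y"
  proof (intro ballI)
    fix x y assume x: "x \<in> lists \<Sigma>" and y: "y \<in> lists \<Sigma>"
    show "(\<forall>u\<in>lists \<Sigma>. \<forall>v\<in>lists \<Sigma>. u @ x @ v \<in> L \<longleftrightarrow> u @ y @ v \<in> L) \<longleftrightarrow> h x = h y"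
    proof
    assume hxy: "h x = h y"
      have e: "run x i = run y i" if ii: "i < n" for i
      proof -
        have "h x i = h y i" using hxy by simp
        thus ?thesis using ii by (simp add: h_def)
      qed
      show "\<forall>u\<in>lists \<Sigma>. \<forall>v\<in>lists \<Sigma>. u @ x @ v \<in> L \<longleftrightarrow> u @ y @ v \<in> L"
      proof (intro ballI)
        fix u v assume u: "u \<in> lists \<Sigma>" and v: "v \<in> lists \<Sigma>"
        have "run u 0 < n" using R1[OF u, of 0] n by simp
        hence "run x (run u 0) = run y (run u 0)" by (rule e)
        thus "u @ x @ v \<in> L \<longleftrightarrow> u @ y @ v \<in> L" using memL[OF u x] memL[OF u y] by simp
      qed
    next
    assume H: "\<forall>u\<in>lists \<Sigma>. \<forall>v\<in>lists \<Sigma>. u @ x @ v \<in> L \<longleftrightarrow> u @ y @ v \<in> L"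
    have "run x i = run y i" if i: "i < n" for i
    proof -
      obtain u where u: "u \<in> lists \<Sigma>" "run u 0 = i" using reach[OF i] by blast
      have "lng (run x i) = lng (run y i)"
      proof
        show "lng (run x i) \<subseteq> lng (run y i)"
        proof
          fix v assume v: "v \<in> lng (run x i)"
          hence "v \<in> lists \<Sigma>" by (simp add: lng_def)
          thus "v \<in> lng (run y i)" using H u v memL[OF u(1) x] memL[OF u(1) y] by auto
        qed
        show "lng (run y i) \<subseteq> lng (run x i)"
        proof
          fix v assume v: "v \<in> lng (run y i)"
          hence "v \<in> lists \<Sigma>" by (simp add: lng_def)
          thus "v \<in> lng (run x i)" using H u v memL[OF u(1) x] memL[OF u(1) y] by auto
        qed
      qed
      moreover have "run x i \<in> {0..<n}" "run y i \<in> {0..<n}" using R1[OF x i] R1[OF y i] by auto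
      ultimately show ?thesis by (rule inj_onD[OF inj])
    qed
    hence "\<And>i. i \<in> {0..<n} \<Longrightarrow> run x i = run y i" by simp
    thus "h x = h y" unfolding h_def by (rule restrict_ext)
    qed
  qed
  have sy: "syntactic_complexity \<Sigma> L = card (h ` (lists \<Sigma> - {[]}))" by (rule syn_card[OF cond])
  have hE: "h ` (lists \<Sigma> - {[]}) = CC n"
  proof
    show "h ` (lists \<Sigma> - {[]}) \<subseteq> CC n"
    proof
      fix t assume "t \<in> h ` (lists \<Sigma> - {[]})"
      then obtain x where x: "x \<in> lists \<Sigma>" "x \<noteq> []" "t = h x" by auto
      have "t \<in> {0..<n} \<rightarrow>\<^sub>E {0..<n}" using x(3) R1[OF x(1)] by (auto simp: h_def)
      moreover have "\<forall>i<n. (n - 2 \<le> i \<longrightarrow> t i = i) \<and> (i < n - 2 \<longrightarrow> i < t i)"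
      proof (intro allI impI conjI)
        fix i assume i: "i < n"
        show "n - 2 \<le> i \<Longrightarrow> t i = i" using R2[OF x(1) _ i] x(3) i by (simp add: h_def)
        show "i < n - 2 \<Longrightarrow> i < t i" using R6[OF x(1,2)] x(3) i by (simp add: h_def)
      qed
      ultimately show "t \<in> CC n" unfolding CC_def by blast
    qed
    show "CC n \<subseteq> h ` (lists \<Sigma> - {[]})"
    proof
      fix s assume s: "s \<in> CC n"
      have sE: "restrict s {0..<n} = s" using s by (auto simp: CC_def PiE_restrict)
      show "s \<in> h ` (lists \<Sigma> - {[]})"
      proof (cases "s \<in> A")
        case True
        then obtain a where a: "a \<in> \<Sigma>" "s = enc a" using encS by blast
        have "h [a] = restrict s {0..<n}" unfolding h_def using a(2) by (simp add: run1)
        hence "s = h [a]" using sE by simp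
        moreover have "[a] \<in> lists \<Sigma> - {[]}" using a by simp
        ultimately show ?thesis by (rule image_eqI)
      next
        case False
        then obtain t1 t2 where t: "t1 \<in> A" "t2 \<in> A" "s = restrict (t2 \<circ> t1) {0..<n}" using gen s by blast
        obtain a b where ab: "a \<in> \<Sigma>" "t1 = enc a" "b \<in> \<Sigma>" "t2 = enc b" using t encS by blast
        have "h [a, b] = restrict (t2 \<circ> t1) {0..<n}" unfolding h_def using ab by (simp add: run2)
        hence "s = h [a, b]" using t(3) by simp
        moreover have "[a, b] \<in> lists \<Sigma> - {[]}" using ab by simp
        ultimately show ?thesis by (rule image_eqI)
      qed
    qed
  qed
  have cS: "card \<Sigma> = card A" by (simp add: \<Sigma>_def)
  have neS: "\<Sigma> \<noteq> {}" using a0 by auto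
  show ?thesis
    apply (rule exI[of _ \<Sigma>], rule exI[of _ L])
    using finS neS rd cS sc sy hE by simp
qed


lemma prod_plus2: "(\<Prod>j<k. (j + 2)) = (fact (k + 1) :: nat)"
  by (induction k) (auto simp: algebra_simps)

lemma prod_aux: "(\<Prod>i<k. (k + 1 - i)) = (fact (k + 1) :: nat)"
proof -
  have "(\<Prod>i<k. (k + 1 - i)) = (\<Prod>i<k. (\<lambda>j. j + 2) (k - Suc i))"
    by (rule prod.cong) auto
  also have "\<dots> = (\<Prod>j<k. (j + 2))" by (rule prod.nat_diff_reindex)
  finally show ?thesis using prod_plus2 by simp
qed

lemma CC_PiE: "CC n = PiE {0..<n} (\<lambda>i. if i < n - 2 then {i<..<n} else {i})"
proof (intro equalityI subsetI)
  fix t assume t: "t \<in> CC n"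
  hence e: "t \<in> extensional {0..<n}" "\<And>i. i < n \<Longrightarrow> t i < n"
    and c: "\<And>i. i < n \<Longrightarrow> n - 2 \<le> i \<Longrightarrow> t i = i" "\<And>i. i < n - 2 \<Longrightarrow> i < t i"
    by (auto simp: CC_def PiE_iff)
  show "t \<in> PiE {0..<n} (\<lambda>i. if i < n - 2 then {i<..<n} else {i})"
  proof (rule PiE_I)
    fix i assume "i \<in> {0..<n}"
    hence i: "i < n" by simp
    show "t i \<in> (if i < n - 2 then {i<..<n} else {i})"
    proof (cases "i < n - 2")
      case True thus ?thesis using c(2)[OF True] e(2)[OF i] by simp
    next
      case False thus ?thesis using c(1)[OF i] by simp
    qed
  next
    fix i assume "i \<notin> {0..<n}" thus "t i = undefined" using e(1) by (simp add: extensional_def)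
  qed
next
  fix t assume t: "t \<in> PiE {0..<n} (\<lambda>i. if i < n - 2 then {i<..<n} else {i})"
  hence v: "\<And>i. i < n \<Longrightarrow> t i \<in> (if i < n - 2 then {i<..<n} else {i})" and e: "t \<in> extensional {0..<n}"
    by (auto simp: PiE_iff)
  have "t \<in> {0..<n} \<rightarrow>\<^sub>E {0..<n}"
  proof (rule PiE_I)
    fix i assume "i \<in> {0..<n}"
    hence i: "i < n" by simp
    show "t i \<in> {0..<n}" using v[OF i] i by (cases "i < n - 2") auto
  next
    fix i assume "i \<notin> {0..<n}" thus "t i = undefined" using e by (simp add: extensional_def)
  qed
  moreover have "\<forall>i<n. (n - 2 \<le> i \<longrightarrow> t i = i) \<and> (i < n - 2 \<longrightarrow> i < t i)"
  proof (intro allI impI conjI)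
    fix i assume i: "i < n"
    show "n - 2 \<le> i \<Longrightarrow> t i = i" using v[OF i] by simp
    show "i < n - 2 \<Longrightarrow> i < t i" using v[OF i] by simp
  qed
  ultimately show "t \<in> CC n" by (simp add: CC_def)
qed

lemma card_CC: assumes "2 \<le> n" shows "card (CC n) = fact (n - 1)"
proof -
  have "card (CC n) = (\<Prod>i\<in>{0..<n}. card (if i < n - 2 then {i<..<n} else {i}))"
    by (simp add: CC_PiE card_PiE)
  also have "\<dots> = (\<Prod>i<n - 2. (n - 2 + 1 - i))"
    by (rule prod.mono_neutral_cong_right) (use assms in auto)
  also have "\<dots> = fact (n - 2 + 1)" by (rule prod_aux)
  also have "n - 2 + 1 = n - 1" using assms by arith
  finally show ?thesis .
qed

definition Red :: "nat \<Rightarrow> (nat \<Rightarrow> nat) set" where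
  "Red n = {t \<in> CC n. \<forall>i<n - 3. i + 2 \<le> t i}"

lemma Red_PiE: assumes n: "3 \<le> n"
  shows "Red n = PiE {0..<n} (\<lambda>i. if i < n - 3 then {i+1<..<n} else if i < n - 2 then {n - 2, n - 1} else {i})"
proof (intro equalityI subsetI)
  fix t assume t: "t \<in> Red n"
  hence e: "t \<in> extensional {0..<n}" "\<And>i. i < n \<Longrightarrow> t i < n"
    and c: "\<And>i. i < n \<Longrightarrow> n - 2 \<le> i \<Longrightarrow> t i = i" "\<And>i. i < n - 2 \<Longrightarrow> i < t i"
    and r: "\<And>i. i < n - 3 \<Longrightarrow> i + 2 \<le> t i"
    by (auto simp: Red_def CC_def PiE_iff)
  show "t \<in> PiE {0..<n} (\<lambda>i. if i < n - 3 then {i+1<..<n} else if i < n - 2 then {n - 2, n - 1} else {i})"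
  proof (rule PiE_I)
    fix i assume "i \<in> {0..<n}"
    hence i: "i < n" by simp
    show "t i \<in> (if i < n - 3 then {i+1<..<n} else if i < n - 2 then {n - 2, n - 1} else {i})"
    proof (cases "i < n - 3")
      case True thus ?thesis using r[OF True] e(2)[OF i] by simp
    next
      case False
      show ?thesis
      proof (cases "i < n - 2")
        case True
        hence "i = n - 3" using False by linarith
        hence "t i = n - 2 \<or> t i = n - 1" using c(2)[OF True] e(2)[OF i] n by linarith
        thus ?thesis using True False by auto
      next
        case F2: False thus ?thesis using c(1)[OF i] False by simp
      qed
    qed
  next
    fix i assume "i \<notin> {0..<n}" thus "t i = undefined" using e(1) by (simp add: extensional_def)
  qed
next
  fix t assume t: "t \<in> PiE {0..<n} (\<lambda>i. if i < n - 3 then {i+1<..<n} else if i < n - 2 then {n - 2, n - 1} else {i})"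
  hence v: "\<And>i. i < n \<Longrightarrow> t i \<in> (if i < n - 3 then {i+1<..<n} else if i < n - 2 then {n - 2, n - 1} else {i})"
    and e: "t \<in> extensional {0..<n}"
    by (auto simp: PiE_iff)
  have v1: "i + 1 < t i \<and> t i < n" if "i < n - 3" for i using v[of i] that by simp
  have v2: "t i = n - 2 \<or> t i = n - 1" if "\<not> i < n - 3" "i < n - 2" for i using v[of i] that by auto
  have v3: "t i = i" if "\<not> i < n - 2" "i < n" for i
  proof -
    have "\<not> i < n - 3" using that by linarith
    thus ?thesis using v[of i] that by simp
  qed
  have "t \<in> {0..<n} \<rightarrow>\<^sub>E {0..<n}"
  proof (rule PiE_I)
    fix i assume "i \<in> {0..<n}"
    hence i: "i < n" by simp
    show "t i \<in> {0..<n}"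
    proof (cases "i < n - 3")
      case True thus ?thesis using v1 by auto
    next
      case False thus ?thesis using v2[OF False] v3[of i] i n by (cases "i < n - 2") auto
    qed
  next
    fix i assume "i \<notin> {0..<n}" thus "t i = undefined" using e by (simp add: extensional_def)
  qed
  moreover have "\<forall>i<n. (n - 2 \<le> i \<longrightarrow> t i = i) \<and> (i < n - 2 \<longrightarrow> i < t i)"
  proof (intro allI impI conjI)
    fix i assume i: "i < n"
    show "n - 2 \<le> i \<Longrightarrow> t i = i" using v3 i by simp
    assume i2: "i < n - 2"
    show "i < t i"
    proof (cases "i < n - 3")
      case True thus ?thesis using v1 by force
    next
      case False thus ?thesis using v2[OF False i2] i2 by auto
    qed
  qed
  moreover have "\<forall>i<n - 3. i + 2 \<le> t i" using v1 by force
  ultimately show "t \<in> Red n" by (simp add: Red_def CC_def)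
qed

lemma card_Red: assumes "3 \<le> n" shows "card (Red n) = 2 * fact (n - 2)"
proof -
  let ?g = "\<lambda>i. card (if i < n - 3 then {i+1<..<n} else if i < n - 2 then {n - 2, n - 1} else {i})"
  have "card (Red n) = (\<Prod>i\<in>{0..<n}. ?g i)"
    by (simp add: Red_PiE[OF assms] card_PiE)
  also have "\<dots> = (\<Prod>i<Suc (n - 3). ?g i)"
    by (rule prod.mono_neutral_right) (use assms in auto)
  also have "\<dots> = (\<Prod>i<n - 3. ?g i) * ?g (n - 3)" by simp
  also have "?g (n - 3) = 2" using assms by auto
  also have "(\<Prod>i<n - 3. ?g i) = (\<Prod>i<n - 3. (n - 3 + 1 - i))"
    by (rule prod.cong) (use assms in auto)
  also have "\<dots> = fact (n - 3 + 1)" by (rule prod_aux)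
  also have "n - 3 + 1 = n - 2" using assms by arith
  finally show ?thesis by simp
qed

definition Irr :: "nat \<Rightarrow> (nat \<Rightarrow> nat) set" where
  "Irr n = CC n - Red n"

lemma card_Irr: assumes "3 \<le> n" shows "card (Irr n) = fact (n - 1) - 2 * fact (n - 2)"
proof -
  have "Red n \<subseteq> CC n" by (auto simp: Red_def)
  moreover have "finite (Red n)" using assms by (simp add: Red_PiE finite_PiE)
  ultimately show ?thesis using card_CC[of n] card_Red[OF assms] assms
    by (simp add: Irr_def card_Diff_subset)
qed

lemma Irr_gen:
  assumes n: "4 \<le> n" and s: "s \<in> CC n"
  shows "s \<in> Irr n \<or> (\<exists>t1\<in>Irr n. \<exists>t2\<in>Irr n. s = restrict (t2 \<circ> t1) {0..<n})"
proof (cases "s \<in> Irr n")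
  case True thus ?thesis by simp
next
  case False
  hence red: "\<forall>i<n - 3. i + 2 \<le> s i" using s by (auto simp: Irr_def Red_def)
  have sP: "s \<in> {0..<n} \<rightarrow>\<^sub>E {0..<n}" and sC: "\<forall>i<n. (n - 2 \<le> i \<longrightarrow> s i = i) \<and> (i < n - 2 \<longrightarrow> i < s i)"
    using s by (auto simp: CC_def)
  have s3: "n - 3 < s (n - 3)" "s (n - 3) < n" using sC sP n by (auto simp: PiE_iff)
  define g0 where "g0 = restrict (\<lambda>i. if i < n - 3 then i + 1 else if i = n - 3 then s (n - 3) else i) {0..<n}"
  define t2 where "t2 = restrict (\<lambda>j. if j = 0 then 1 else if j \<le> n - 3 then s (j - 1) else j) {0..<n}"
  have g0C: "g0 \<in> CC n" unfolding CC_def g0_def using s3 n by auto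
  have g0I: "g0 \<in> Irr n"
  proof -
    have "g0 0 = 1" using n by (simp add: g0_def)
    moreover have "0 < n - 3" using n by simp
    ultimately have "g0 \<notin> Red n" unfolding Red_def by force
    thus ?thesis using g0C by (simp add: Irr_def)
  qed
  have t2v: "t2 j < n \<and> j < t2 j" if "j < n - 2" for j
  proof (cases "j = 0")
    case True thus ?thesis using n by (simp add: t2_def)
  next
    case False
    hence "j - 1 < n - 3" using that by linarith
    hence "j - 1 + 2 \<le> s (j - 1)" "s (j - 1) < n" using red sP by (auto simp: PiE_iff)
    thus ?thesis using False that by (simp add: t2_def)
  qed
  have t2C: "t2 \<in> CC n"
    unfolding CC_def
  proof (intro CollectI conjI allI impI)
    show "t2 \<in> {0..<n} \<rightarrow>\<^sub>E {0..<n}"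
    proof (rule PiE_I)
      fix j assume j: "j \<in> {0..<n}"
      show "t2 j \<in> {0..<n}"
      proof (cases "j < n - 2")
        case True thus ?thesis using t2v by auto
      next
        case False
        hence "\<not> j \<le> n - 3" "j \<noteq> 0" using n by linarith+
        thus ?thesis using j by (simp add: t2_def)
      qed
    qed (simp add: t2_def)
    fix i assume i: "i < n"
    show "t2 i = i" if "n - 2 \<le> i"
    proof -
      have "\<not> i \<le> n - 3" "i \<noteq> 0" using that n by linarith+
      thus ?thesis using i by (simp add: t2_def)
    qed
    show "i < n - 2 \<Longrightarrow> i < t2 i" using t2v by blast
  qed
  have t2I: "t2 \<in> Irr n"
  proof -
    have "t2 0 = 1" using n by (simp add: t2_def)
    moreover have "0 < n - 3" using n by simp
    ultimately have "t2 \<notin> Red n" unfolding Red_def by force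
    thus ?thesis using t2C by (simp add: Irr_def)
  qed
  have "s = restrict (t2 \<circ> g0) {0..<n}"
  proof
    fix i show "s i = restrict (t2 \<circ> g0) {0..<n} i"
    proof (cases "i < n")
      case False thus ?thesis using sP by (auto simp: PiE_iff extensional_def)
    next
      case True
      show ?thesis
      proof (cases "i < n - 3")
        case True
        hence "Suc i < n" "Suc i \<le> n - 3" "Suc i \<noteq> 0" using n by linarith+
        thus ?thesis using \<open>i < n\<close> True by (simp add: g0_def t2_def)
      next
        case False
        show ?thesis
        proof (cases "i = n - 3")
          case True thus ?thesis using s3 n by (simp add: g0_def t2_def)
        next
          case False
          hence "n - 2 \<le> i" using \<open>\<not> i < n - 3\<close> by linarith
          thus ?thesis using sC \<open>i < n\<close> n False \<open>\<not> i < n - 3\<close> by (simp add: g0_def t2_def)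
        qed
      qed
    qed
  qed
  thus ?thesis using g0I t2I by blast
qed

lemma gg_Irr: assumes "4 \<le> n" shows "gg n \<in> Irr n"
proof -
  have "gg n 0 = 1" "0 < n - 3" using assms by (auto simp: gg_def)
  hence "gg n \<notin> Red n" unfolding Red_def by force
  thus ?thesis using gg_in[of n] assms by (simp add: Irr_def)
qed

lemma gg'_Irr: assumes "4 \<le> n" shows "gg' n \<in> Irr n"
proof -
  have "gg' n 0 = 1" "0 < n - 3" using assms by (auto simp: gg'_def)
  hence "gg' n \<notin> Red n" unfolding Red_def by force
  thus ?thesis using gg'_in[of n] assms by (simp add: Irr_def)
qed

lemma finite_CC: "finite (CC n)"
  by (simp add: CC_PiE finite_PiE)

lemma part4:
  assumes n: "4 \<le> n"
  shows "\<exists>(\<Sigma>::nat set) L. finite \<Sigma> \<and> \<Sigma> \<noteq> {} \<and> reverse_definite \<Sigma> L \<and>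
        card \<Sigma> = fact (n - 1) - 2 * fact (n - 2) \<and>
        state_complexity \<Sigma> L = n \<and> syntactic_complexity \<Sigma> L = fact (n - 1)"
proof -
  have "\<exists>(\<Sigma>::nat set) L. finite \<Sigma> \<and> \<Sigma> \<noteq> {} \<and> reverse_definite \<Sigma> L \<and> card \<Sigma> = card (Irr n) \<and>
           state_complexity \<Sigma> L = n \<and> syntactic_complexity \<Sigma> L = card (CC n)"
    by (rule construct) (use n Irr_gen gg_Irr gg'_Irr finite_CC in \<open>auto simp: Irr_def\<close>)
  thus ?thesis using card_Irr[of n] card_CC[of n] n by simp
qed

lemma part2_3:
  shows "\<exists>(\<Sigma>::nat set) L. finite \<Sigma> \<and> \<Sigma> \<noteq> {} \<and> reverse_definite \<Sigma> L \<and>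
        state_complexity \<Sigma> L = 3 \<and> syntactic_complexity \<Sigma> L = fact (3 - 1)"
proof -
  have "\<exists>(\<Sigma>::nat set) L. finite \<Sigma> \<and> \<Sigma> \<noteq> {} \<and> reverse_definite \<Sigma> L \<and> card \<Sigma> = card (CC 3) \<and>
           state_complexity \<Sigma> L = 3 \<and> syntactic_complexity \<Sigma> L = card (CC 3)"
    by (rule construct) (use gg_in[of 3] gg'_in[of 3] finite_CC in auto)
  thus ?thesis using card_CC[of 3] by auto
qed


lemma part2_1:
  "\<exists>(\<Sigma>::nat set) L. finite \<Sigma> \<and> \<Sigma> \<noteq> {} \<and> reverse_definite \<Sigma> L \<and>
        state_complexity \<Sigma> L = 1 \<and> syntactic_complexity \<Sigma> L = fact (1 - 1)"
proof -
  let ?S = "{0::nat}"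
  let ?L = "lists ?S"
  have rd: "reverse_definite ?S ?L" unfolding reverse_definite_def
    by (rule exI[of _ "{}"], rule exI[of _ "{[]}"]) auto
  have d: "deriv w ?L = ?L" if "w \<in> lists ?S" for w using that by (auto simp: deriv_def)
  have Q: "Qs ?S ?L = {?L}" using d by (auto simp: Qs_def)
  have sc: "state_complexity ?S ?L = 1" using MN[of ?L ?S] Q by simp
  have sy: "syntactic_complexity ?S ?L = card ((\<lambda>x. (0::nat)) ` (lists ?S - {[]}))"
    by (rule syn_card) auto
  have "(\<lambda>x. (0::nat)) ` (lists ?S - {[]}) = {0}"
  proof -
    have "[0] \<in> lists ?S - {[]}" by simp
    thus ?thesis by blast
  qed
  hence "syntactic_complexity ?S ?L = 1" using sy by simp
  thus ?thesis using rd sc by (intro exI[of _ ?S] exI[of _ ?L]) simp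
qed

lemma part2_2:
  "\<exists>(\<Sigma>::nat set) L. finite \<Sigma> \<and> \<Sigma> \<noteq> {} \<and> reverse_definite \<Sigma> L \<and>
        state_complexity \<Sigma> L = 2 \<and> syntactic_complexity \<Sigma> L = fact (2 - 1)"
proof -
  let ?S = "{0::nat}"
  define L where "L = {w \<in> lists ?S. w \<noteq> []}"
  have split: "w = [0] @ tl w" if "w \<in> lists ?S" "w \<noteq> []" for w
    using that by (cases w) auto
  have rd: "reverse_definite ?S L" unfolding reverse_definite_def
  proof (rule exI[of _ "{}"], rule exI[of _ "{[0]}"], intro conjI)
    show "L = {} \<union> {f @ w |f w. f \<in> {[0]} \<and> w \<in> lists ?S}"
    proof (intro equalityI subsetI)
      fix w assume w: "w \<in> L"
      hence wl: "w \<in> lists ?S" "w \<noteq> []" by (auto simp: L_def)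
      then obtain a t where at: "w = a # t" by (cases w) auto
      hence "a = 0" "t \<in> lists ?S" using wl by auto
      hence "w = [0] @ t" "t \<in> lists ?S" using at by auto
      thus "w \<in> {} \<union> {f @ w |f w. f \<in> {[0]} \<and> w \<in> lists ?S}" by blast
    next
      fix w assume "w \<in> {} \<union> {f @ w |f w. f \<in> {[0]} \<and> w \<in> lists ?S}"
      then obtain v where "w = [0] @ v" "v \<in> lists ?S" by blast
      thus "w \<in> L" by (simp add: L_def)
    qed
  qed auto
  have sub: "L \<subseteq> lists ?S" by (auto simp: L_def)
  have d1: "deriv w L = lists ?S" if w: "w \<in> lists ?S" "w \<noteq> []" for w
  proof
    show "deriv w L \<subseteq> lists ?S" unfolding deriv_def L_def by auto
    show "lists ?S \<subseteq> deriv w L"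
    proof
      fix v assume "v \<in> lists ?S"
      hence "w @ v \<in> lists ?S" "w @ v \<noteq> []" using w by auto
      thus "v \<in> deriv w L" unfolding deriv_def L_def by simp
    qed
  qed
  have Q: "Qs ?S L = {L, lists ?S}"
  proof
    show "Qs ?S L \<subseteq> {L, lists ?S}"
    proof
      fix X assume "X \<in> Qs ?S L"
      then obtain w where w: "w \<in> lists ?S" "X = deriv w L" unfolding Qs_def by blast
      show "X \<in> {L, lists ?S}"
      proof (cases "w = []")
        case True thus ?thesis using w by simp
      next
        case False thus ?thesis using w d1[OF w(1) False] by simp
      qed
    qed
    have "L \<in> Qs ?S L" by (rule L_in_Qs)
    moreover have "lists ?S \<in> Qs ?S L"
    proof -
      have "deriv [0] L = lists ?S" by (rule d1) auto
      moreover have "[0] \<in> lists ?S" by simp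
      ultimately show ?thesis unfolding Qs_def by blast
    qed
    ultimately show "{L, lists ?S} \<subseteq> Qs ?S L" by simp
  qed
  have ne: "L \<noteq> lists ?S"
  proof
    assume eq: "L = lists ?S"
    have "[] \<in> L" unfolding eq by simp
    thus False by (simp add: L_def)
  qed
  have finQ: "finite (Qs ?S L)" using Q by simp
  have "card (Qs ?S L) = 2" using Q ne by simp
  hence sc: "state_complexity ?S L = 2" using MN[OF sub finQ] by simp
  have sy: "syntactic_complexity ?S L = card ((\<lambda>x. if x = [] then (0::nat) else 1) ` (lists ?S - {[]}))"
  proof (rule syn_card, intro ballI)
    fix x y assume x: "x \<in> lists ?S" and y: "y \<in> lists ?S"
    show "(\<forall>u\<in>lists ?S. \<forall>v\<in>lists ?S. u @ x @ v \<in> L \<longleftrightarrow> u @ y @ v \<in> L) \<longleftrightarrow>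
          (if x = [] then (0::nat) else 1) = (if y = [] then 0 else 1)"
    proof
      assume "\<forall>u\<in>lists ?S. \<forall>v\<in>lists ?S. u @ x @ v \<in> L \<longleftrightarrow> u @ y @ v \<in> L"
      hence "[] @ x @ [] \<in> L \<longleftrightarrow> [] @ y @ [] \<in> L" by blast
      thus "(if x = [] then (0::nat) else 1) = (if y = [] then 0 else 1)" using x y by (auto simp: L_def)
    next
      assume "(if x = [] then (0::nat) else 1) = (if y = [] then 0 else 1)"
      hence "x = [] \<longleftrightarrow> y = []" by (auto split: if_splits)
      note xy = this
      show "\<forall>u\<in>lists ?S. \<forall>v\<in>lists ?S. u @ x @ v \<in> L \<longleftrightarrow> u @ y @ v \<in> L"
      proof (intro ballI)
        fix u v assume u: "u \<in> lists ?S" and v: "v \<in> lists ?S"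
        have "u @ x @ v \<in> L \<longleftrightarrow> \<not> (u = [] \<and> x = [] \<and> v = [])" using u v x by (simp add: L_def)
        moreover have "u @ y @ v \<in> L \<longleftrightarrow> \<not> (u = [] \<and> y = [] \<and> v = [])" using u v y by (simp add: L_def)
        ultimately show "u @ x @ v \<in> L \<longleftrightarrow> u @ y @ v \<in> L" using xy by blast
      qed
    qed
  qed
  have "(\<lambda>x. if x = [] then (0::nat) else 1) ` (lists ?S - {[]}) = {1}"
  proof -
    have "[0] \<in> lists ?S - {[]}" by simp
    hence "1 \<in> (\<lambda>x. if x = [] then (0::nat) else 1) ` (lists ?S - {[]})"
      by (rule rev_image_eqI) simp
    moreover have "(\<lambda>x. if x = [] then (0::nat) else 1) ` (lists ?S - {[]}) \<subseteq> {1}" by auto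
    ultimately show ?thesis by blast
  qed
  hence "syntactic_complexity ?S L = 1" using sy by simp
  thus ?thesis using rd sc by (intro exI[of _ ?S] exI[of _ L]) simp
qed

lemma part2:
  assumes "1 \<le> n"
  shows "\<exists>(\<Sigma>::nat set) L. finite \<Sigma> \<and> \<Sigma> \<noteq> {} \<and> reverse_definite \<Sigma> L \<and>
        state_complexity \<Sigma> L = n \<and> syntactic_complexity \<Sigma> L = fact (n - 1)"
proof -
  consider "n = 1" | "n = 2" | "n = 3" | "4 \<le> n" using assms by linarith
  thus ?thesis
  proof cases
    case 1 thus ?thesis using part2_1 by simp
  next
    case 2 thus ?thesis using part2_2 by simp
  next
    case 3 thus ?thesis using part2_3 by simp
  next
    case 4 thus ?thesis using part4[OF 4] by blast
  qed
qed

theorem theorem3: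
  shows
   "(\<forall>(\<Sigma>::'a set) L. finite \<Sigma> \<and> \<Sigma> \<noteq> {} \<and> reverse_definite \<Sigma> L \<longrightarrow>
        syntactic_complexity \<Sigma> L \<le> fact (state_complexity \<Sigma> L - 1))
    \<and> (\<forall>n::nat. n \<ge> 1 \<longrightarrow> (\<exists>(\<Sigma>::nat set) L. finite \<Sigma> \<and> \<Sigma> \<noteq> {} \<and> reverse_definite \<Sigma> L \<and>
        state_complexity \<Sigma> L = n \<and> syntactic_complexity \<Sigma> L = fact (n - 1)))
    \<and> (\<forall>(\<Sigma>::'a set) L. finite \<Sigma> \<and> \<Sigma> \<noteq> {} \<and> reverse_definite \<Sigma> L \<and>
        state_complexity \<Sigma> L \<ge> 4 \<and>
        syntactic_complexity \<Sigma> L = fact (state_complexity \<Sigma> L - 1) \<longrightarrow>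
        card \<Sigma> \<ge> fact (state_complexity \<Sigma> L - 1) - 2 * fact (state_complexity \<Sigma> L - 2))
    \<and> (\<forall>n::nat. n \<ge> 4 \<longrightarrow> (\<exists>(\<Sigma>::nat set) L. finite \<Sigma> \<and> \<Sigma> \<noteq> {} \<and> reverse_definite \<Sigma> L \<and>
        card \<Sigma> = fact (n - 1) - 2 * fact (n - 2) \<and>
        state_complexity \<Sigma> L = n \<and> syntactic_complexity \<Sigma> L = fact (n - 1)))"
proof (intro conjI)
  show "\<forall>(\<Sigma>::'a set) L. finite \<Sigma> \<and> \<Sigma> \<noteq> {} \<and> reverse_definite \<Sigma> L \<longrightarrow>
        syntactic_complexity \<Sigma> L \<le> fact (state_complexity \<Sigma> L - 1)"
  proof (intro allI impI)
    fix \<Sigma> :: "'a set" and L assume "finite \<Sigma> \<and> \<Sigma> \<noteq> {} \<and> reverse_definite \<Sigma> L"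
    thus "syntactic_complexity \<Sigma> L \<le> fact (state_complexity \<Sigma> L - 1)" using part1[of \<Sigma> L] by simp
  qed
  show "\<forall>n::nat. n \<ge> 1 \<longrightarrow> (\<exists>(\<Sigma>::nat set) L. finite \<Sigma> \<and> \<Sigma> \<noteq> {} \<and> reverse_definite \<Sigma> L \<and>
        state_complexity \<Sigma> L = n \<and> syntactic_complexity \<Sigma> L = fact (n - 1))"
    using part2 by (intro allI impI) simp
  show "\<forall>(\<Sigma>::'a set) L. finite \<Sigma> \<and> \<Sigma> \<noteq> {} \<and> reverse_definite \<Sigma> L \<and>
        state_complexity \<Sigma> L \<ge> 4 \<and>
        syntactic_complexity \<Sigma> L = fact (state_complexity \<Sigma> L - 1) \<longrightarrow>
        card \<Sigma> \<ge> fact (state_complexity \<Sigma> L - 1) - 2 * fact (state_complexity \<Sigma> L - 2)"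
  proof (intro allI impI)
    fix \<Sigma> :: "'a set" and L
    assume H: "finite \<Sigma> \<and> \<Sigma> \<noteq> {} \<and> reverse_definite \<Sigma> L \<and>
        state_complexity \<Sigma> L \<ge> 4 \<and> syntactic_complexity \<Sigma> L = fact (state_complexity \<Sigma> L - 1)"
    show "card \<Sigma> \<ge> fact (state_complexity \<Sigma> L - 1) - 2 * fact (state_complexity \<Sigma> L - 2)"
      using part3[of \<Sigma> L] H by simp
  qed
  show "\<forall>n::nat. n \<ge> 4 \<longrightarrow> (\<exists>(\<Sigma>::nat set) L. finite \<Sigma> \<and> \<Sigma> \<noteq> {} \<and> reverse_definite \<Sigma> L \<and>
        card \<Sigma> = fact (n - 1) - 2 * fact (n - 2) \<and>
        state_complexity \<Sigma> L = n \<and> syntactic_complexity \<Sigma> L = fact (n - 1))"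
    using part4 by (intro allI impI) simp
qed


end
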